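(* Let $T=2^m$, $d\ge1$, $u_{1:T}\in(\mathbb{R}^d)^T$, $\bar u=\frac1T\sum_{t=1}^Tu_t$, and $\bar S=\sum_{t=1}^T\|u_t-\bar u\|_2$. Then for every scale $j^*\in[1:m]$, $\bar S^{(j^* )}\le\bar S$, where $\bar S^{(j^* )}$ is defined in the context.
   Context: Haar features for $T=2^m$: for scale $j\in[1:m]$ and location $l\in[1:2^{-j}T]$, $h^{(j,l)}\in\mathbb{R}^T$ has $t$-th entry $1$ for $t\in[2^j(l-1)+1:2^j(l-1)+2^{j-1}]$, $-1$ for $t\in[2^j(l-1)+2^{j-1}+1:2^jl]$, and $0$ otherwise; normalized $\tilde h^{(j,l)}=2^{-j/2}h^{(j,l)}$. For $i\in[1:d]$, $u^{(i)}_{1:T}\in\mathbb{R}^T$ is the sequence of $i$-th coordinates of $u_1,\ldots,u_T$. Coefficient $\hat u^{(j,l)}\in\mathbb{R}^d$ has $i$-th entry $\langle\tilde h^{(j,l)},u^{(i)}_{1:T}\rangle$. Detail sequences: $z^{(j,l)}_t=\hat u^{(j,l)}\tilde h^{(j,l)}_t$, $z^{(j)}=\sum_l z^{(j,l)}$, and $\bar S^{(j)}=\sum_{t=1}^T\|z^{(j)}_t\|_2$. *)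

theory Defs
  imports "HOL-Analysis.Analysis"
begin

text \<open>Vectors in R^d are rendered as real^'d (Euclidean norm). Sequences u_1..u_T
  are functions nat => real^'d, only values at t in {1..T} matter.\<close>

definition haar :: "nat \<Rightarrow> nat \<Rightarrow> nat \<Rightarrow> real" where
  "haar j l t =
     (if 2^j * (l - 1) + 1 \<le> t \<and> t \<le> 2^j * (l - 1) + 2^(j - 1) then 1
      else if 2^j * (l - 1) + 2^(j - 1) + 1 \<le> t \<and> t \<le> 2^j * l then -1
      else 0)"

definition haar_norm :: "nat \<Rightarrow> nat \<Rightarrow> nat \<Rightarrow> real" where
  "haar_norm j l t = 2 powr (- real j / 2) * haar j l t"

definition haar_coef :: "nat \<Rightarrow> (nat \<Rightarrow> real^'d) \<Rightarrow> nat \<Rightarrow> nat \<Rightarrow> real^'d" where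
  "haar_coef T u j l = (\<chi> i. \<Sum>t = 1..T. haar_norm j l t * (u t $ i))"

definition detail_jl :: "nat \<Rightarrow> (nat \<Rightarrow> real^'d) \<Rightarrow> nat \<Rightarrow> nat \<Rightarrow> nat \<Rightarrow> real^'d" where
  "detail_jl T u j l t = haar_norm j l t *\<^sub>R haar_coef T u j l"

definition detail :: "nat \<Rightarrow> (nat \<Rightarrow> real^'d) \<Rightarrow> nat \<Rightarrow> nat \<Rightarrow> real^'d" where
  "detail T u j t = (\<Sum>l = 1..T div 2^j. detail_jl T u j l t)"

definition detail_S :: "nat \<Rightarrow> (nat \<Rightarrow> real^'d) \<Rightarrow> nat \<Rightarrow> real" where
  "detail_S T u j = (\<Sum>t = 1..T. norm (detail T u j t))"

end

theory Submission
  imports Defs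
begin

lemma haar_abs_le: "\<bar>haar j l t\<bar> \<le> 1"
  by (simp add: haar_def)

lemma haar_supp:
  assumes "1 \<le> l" "haar j l t \<noteq> 0"
  shows "2^j * (l - 1) + 1 \<le> t \<and> t \<le> 2^j * l"
proof -
  have h1: "(2::nat)^(j-1) \<le> 2^j" by simp
  have h2: "2^j * (l - 1) + 2^j = (2::nat)^j * l" using assms(1)
    by (cases l) auto
  have h3: "2^j * (l - 1) + 2^(j-1) \<le> (2::nat)^j * l" using h1 h2 by linarith
  show ?thesis using assms(2) h3 unfolding haar_def by (auto split: if_splits)
qed

lemma haar_unique:
  assumes "1 \<le> l" "haar j l t \<noteq> 0"
  shows "l = (t - 1) div 2^j + 1"
proof -
  from haar_supp[OF assms] have a: "2^j * (l - 1) \<le> t - 1" "t - 1 < 2^j * (l-1) + 2^j"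
    using assms(1) by (auto simp: algebra_simps)
  have "(t - 1) div 2^j = l - 1"
    using a by (simp add: div_nat_eqI mult.commute)
  then show ?thesis using assms(1) by simp
qed

lemma haar_abs_sum:
  assumes "1 \<le> l" "finite A"
  shows "(\<Sum>t\<in>A. \<bar>haar j l t\<bar>) \<le> 2^j"
proof -
  let ?B = "{2^j * (l - 1) + 1 .. 2^j * l}"
  have "(\<Sum>t\<in>A. \<bar>haar j l t\<bar>) = (\<Sum>t\<in>A \<inter> ?B. \<bar>haar j l t\<bar>)"
  proof (rule sum.mono_neutral_right)
    show "\<forall>i\<in>A - A \<inter> ?B. \<bar>haar j l i\<bar> = 0"
    proof
      fix i assume "i \<in> A - A \<inter> ?B"
      then have "\<not> (2^j * (l - 1) + 1 \<le> i \<and> i \<le> 2^j * l)" by auto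
      then show "\<bar>haar j l i\<bar> = 0" using haar_supp[OF assms(1), of j i] by auto
    qed
  qed (use assms in auto)
  also have "\<dots> \<le> (\<Sum>t\<in>A \<inter> ?B. 1)"
    by (rule sum_mono) (simp add: haar_abs_le)
  also have "\<dots> = card (A \<inter> ?B)" by simp
  also have "\<dots> \<le> card ?B" by (intro of_nat_mono card_mono) auto
  also have "card ?B = 2^j"
  proof -
    have "2^j * (l - 1) + 2^j = (2::nat)^j * l" using assms(1)
      by (cases l) auto
    then show ?thesis by simp
  qed
  finally show ?thesis by simp
qed

lemma haar_sum_zero:
  assumes "1 \<le> j" "1 \<le> l" "2^j * l \<le> N"
  shows "(\<Sum>t = 1..N. haar j l t) = 0"
proof -
  define a where "a = 2^j * (l - 1)"
  define h where "h = (2::nat)^(j-1)"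
  have jj: "(2::nat)^j = 2 * h" unfolding h_def using assms(1)
    by (cases j) auto
  have al: "2^j * l = a + 2 * h" unfolding a_def using assms(2)
    by (cases l) (auto simp: jj[symmetric])
  have hd: "haar j l t = (if a+1 \<le> t \<and> t \<le> a+h then 1 else if a+h+1 \<le> t \<and> t \<le> a+2*h then -1 else 0)" for t
    unfolding haar_def a_def[symmetric] h_def[symmetric] al by (rule refl)
  have "(\<Sum>t = 1..N. haar j l t) = (\<Sum>t\<in>{a+1..a+2*h}. haar j l t)"
  proof (rule sum.mono_neutral_right)
    show "\<forall>i\<in>{1..N} - {a+1..a+2*h}. haar j l i = 0"
    proof
      fix i assume "i \<in> {1..N} - {a+1..a+2*h}"
      then have "\<not> (a + 1 \<le> i \<and> i \<le> a + 2 * h)" by auto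
      then show "haar j l i = 0" using haar_supp[OF assms(2), of j i] unfolding a_def[symmetric] al by auto
    qed
  qed (use assms al in auto)
  also have "{a+1..a+2*h} = {a+1..a+h} \<union> {a+h+1..a+2*h}" by auto
  also have "(\<Sum>t\<in>{a+1..a+h} \<union> {a+h+1..a+2*h}. haar j l t)
     = (\<Sum>t\<in>{a+1..a+h}. haar j l t) + (\<Sum>t\<in>{a+h+1..a+2*h}. haar j l t)"
    by (rule sum.union_disjoint) auto
  also have "(\<Sum>t\<in>{a+1..a+h}. haar j l t) = (\<Sum>t\<in>{a+1..a+h}. 1)"
    by (rule sum.cong) (simp_all add: hd)
  also have "(\<Sum>t\<in>{a+h+1..a+2*h}. haar j l t) = (\<Sum>t\<in>{a+h+1..a+2*h}. -1)"
    by (rule sum.cong) (simp_all add: hd)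
  finally show ?thesis by simp
qed

lemma haar_count:
  "(\<Sum>l = 1..K. \<bar>haar j l t\<bar>) \<le> 1"
proof -
  let ?l0 = "(t - 1) div 2^j + 1"
  have "(\<Sum>l = 1..K. \<bar>haar j l t\<bar>) = (\<Sum>l\<in>{1..K} \<inter> {?l0}. \<bar>haar j l t\<bar>)"
  proof (rule sum.mono_neutral_right)
    show "\<forall>i\<in>{1..K} - {1..K} \<inter> {?l0}. \<bar>haar j i t\<bar> = 0"
    proof
      fix i assume "i \<in> {1..K} - {1..K} \<inter> {?l0}"
      then have "1 \<le> i" "i \<noteq> ?l0" by auto
      then show "\<bar>haar j i t\<bar> = 0" using haar_unique[of i j t] by auto
    qed
  qed auto
  also have "\<dots> \<le> 1"
  proof (cases "?l0 \<in> {1..K}")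
    case True
    then have "{1..K} \<inter> {?l0} = {?l0}" by auto
    then show ?thesis by (simp add: haar_abs_le)
  next
    case False
    then have "{1..K} \<inter> {?l0} = {}" by auto
    then show ?thesis by simp
  qed
  finally show ?thesis .
qed

lemma coef_eq:
  "haar_coef T u j l = 2 powr (- real j / 2) *\<^sub>R (\<Sum>t = 1..T. haar j l t *\<^sub>R u t)"
  by (simp add: haar_coef_def haar_norm_def vec_eq_iff sum_component sum_distrib_left mult.assoc)

theorem lemma8:
  fixes m j :: nat and u :: "nat \<Rightarrow> real^'d"
  assumes "1 \<le> j" and "j \<le> m"
  shows "detail_S (2^m) u j
           \<le> (\<Sum>t = 1..2^m. norm (u t - (1 / real (2^m)) *\<^sub>R (\<Sum>s = 1..2^m. u s)))"
proof -
  define N :: nat where "N = 2^m"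
  define K where "K = N div 2^j"
  define v where "v = (1 / real (2^m)) *\<^sub>R (\<Sum>s = 1..2^m. u s)"
  define p :: real where "p = 2 powr (- real j / 2)"
  define w where "w l = (\<Sum>t = 1..N. haar j l t *\<^sub>R u t)" for l
  have pp: "p * 2^j * p = 1"
  proof -
    have "p * p = 2 powr (- real j)" unfolding p_def by (simp add: powr_add[symmetric])
    also have "\<dots> = inverse (2^j)" by (simp add: powr_minus powr_realpow)
    finally show ?thesis by (simp add: field_simps)
  qed
  have KL: "2^j * l \<le> N" if "l \<in> {1..K}" for l
  proof -
    have "2^j * l \<le> 2^j * (N div 2^j)" using that K_def by simp
    also have "\<dots> \<le> N" by simp
    finally show ?thesis .
  qed
  have wv: "w l = (\<Sum>t = 1..N. haar j l t *\<^sub>R (u t - v))" if "l \<in> {1..K}" for l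
  proof -
    have "(\<Sum>t = 1..N. haar j l t *\<^sub>R (u t - v)) = w l - (\<Sum>t = 1..N. haar j l t) *\<^sub>R v"
      unfolding w_def by (simp add: scaleR_diff_right sum_subtractf scaleR_sum_left)
    also have "(\<Sum>t = 1..N. haar j l t) = 0" using haar_sum_zero[OF assms(1) _ KL[OF that]] that by simp
    finally show ?thesis by simp
  qed
  have "detail_S N u j = (\<Sum>t = 1..N. norm (\<Sum>l = 1..K. detail_jl N u j l t))"
    unfolding detail_S_def detail_def K_def by simp
  also have "\<dots> \<le> (\<Sum>t = 1..N. \<Sum>l = 1..K. norm (detail_jl N u j l t))"
    by (intro sum_mono norm_sum)
  also have "\<dots> = (\<Sum>l = 1..K. \<Sum>t = 1..N. norm (detail_jl N u j l t))"
    by (rule sum.swap)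
  also have "\<dots> = (\<Sum>l = 1..K. p * (\<Sum>t = 1..N. \<bar>haar j l t\<bar>) * norm (haar_coef N u j l))"
    by (simp add: detail_jl_def haar_norm_def abs_mult p_def sum_distrib_left sum_distrib_right mult.assoc)
  also have "\<dots> \<le> (\<Sum>l = 1..K. p * 2^j * norm (haar_coef N u j l))"
    by (intro sum_mono mult_right_mono mult_left_mono haar_abs_sum) (auto simp: p_def)
  also have "\<dots> = (\<Sum>l = 1..K. norm (w l))"
  proof (rule sum.cong)
    fix l
    have "haar_coef N u j l = p *\<^sub>R w l" unfolding coef_eq w_def p_def by simp
    then have "norm (haar_coef N u j l) = p * norm (w l)" by (simp add: p_def)
    then show "p * 2^j * norm (haar_coef N u j l) = norm (w l)"
      by (simp add: mult.assoc[symmetric] pp)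
  qed simp
  also have "\<dots> = (\<Sum>l = 1..K. norm (\<Sum>t = 1..N. haar j l t *\<^sub>R (u t - v)))"
    by (rule sum.cong) (auto simp: wv)
  also have "\<dots> \<le> (\<Sum>l = 1..K. \<Sum>t = 1..N. \<bar>haar j l t\<bar> * norm (u t - v))"
    by (intro sum_mono order.trans[OF norm_sum]) simp
  also have "\<dots> = (\<Sum>t = 1..N. (\<Sum>l = 1..K. \<bar>haar j l t\<bar>) * norm (u t - v))"
    by (subst sum.swap) (simp add: sum_distrib_right)
  also have "\<dots> \<le> (\<Sum>t = 1..N. norm (u t - v))"
    by (intro sum_mono mult_left_le_one_le haar_count) auto
  finally show ?thesis unfolding N_def v_def .
qed

end
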